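(* For integers $n,k\geqslant 1$, let $\mathfrak{A}_{n,k}$ be the set of words $\omega=(\omega_1,\dots,\omega_n)$ of length $n$ on the alphabet $\{1,\dots,k\}$ such that $\omega$ avoids the pattern $010$, every letter of $\{1,\dots,k\}$ occurs in $\omega$, and $\omega_1=k$. Let $\mathfrak{a}_{n,k}=\#\mathfrak{A}_{n,k}$. Then for all $n,k\geqslant 1$, $$\mathfrak{a}_{n,k}=\genfrac{[}{]}{0pt}{}{n}{n+1-k}.$$
   Context: $\genfrac{[}{]}{0pt}{}{n}{j}$ denotes the unsigned Stirling number of the first kind (the number of permutations of $n$ elements with exactly $j$ cycles), with the convention that it is $0$ when $j\leqslant 0$ and $n\geqslant 1$, or when $j>n$. A word (sequence) $\omega=(\omega_1,\dots,\omega_n)$ of integers contains a pattern $p=(p_1,\dots,p_k)$ if some subsequence $(\omega_{i_1},\dots,\omega_{i_k})$ with $i_1<\dots<i_k$ is order-isomorphic to $p$ (i.e. $\omega_{i_a}<\omega_{i_b}$ iff $p_a<p_b$ and $\omega_{i_a}=\omega_{i_b}$ iff $p_a=p_b$); otherwise $\omega$ avoids $p$. Thus avoiding $010$ means there are no $i<j<l$ with $\omega_i=\omega_l<\omega_j$. *)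

theory Defs
  imports Main "HOL-Combinatorics.Stirling"
begin

definition avoids_010 :: "nat list \<Rightarrow> bool" where
  "avoids_010 w \<longleftrightarrow>
     \<not> (\<exists>i j l. i < j \<and> j < l \<and> l < length w \<and> w ! i = w ! l \<and> w ! l < w ! j)"

definition A_set :: "nat \<Rightarrow> nat \<Rightarrow> nat list set" where
  "A_set n k = {w. length w = n \<and> set w = {1..k} \<and> avoids_010 w \<and> w ! 0 = k}"

end

theory Submission imports Defs "HOL-Library.Sublist" begin

lemma subseq_Cons_idx:
  "subseq (x#p) w \<longleftrightarrow> (\<exists>i<length w. w!i = x \<and> subseq p (drop (Suc i) w))"
proof (induction w)
  case Nil thus ?case by simp
next
  case (Cons y ws)
  have "subseq (x#p) (y#ws) \<longleftrightarrow> (x = y \<and> subseq p ws) \<or> subseq (x#p) ws"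
    by (cases "x = y") (simp_all add: subseq_Cons2_iff, meson subseq_Cons')
  also have "\<dots> \<longleftrightarrow> (\<exists>i<length (y#ws). (y#ws)!i = x \<and> subseq p (drop (Suc i) (y#ws)))"
    unfolding Cons.IH
  proof
    assume "x = y \<and> subseq p ws \<or> (\<exists>i<length ws. ws ! i = x \<and> subseq p (drop (Suc i) ws))"
    thus "\<exists>i<length (y#ws). (y#ws)!i = x \<and> subseq p (drop (Suc i) (y#ws))"
    proof
      assume "x = y \<and> subseq p ws" thus ?thesis by (intro exI[of _ 0]) auto
    next
      assume "\<exists>i<length ws. ws ! i = x \<and> subseq p (drop (Suc i) ws)"
      then obtain i where "i<length ws" "ws ! i = x" "subseq p (drop (Suc i) ws)" by blast
      thus ?thesis by (intro exI[of _ "Suc i"]) auto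
    qed
  next
    assume "\<exists>i<length (y#ws). (y#ws)!i = x \<and> subseq p (drop (Suc i) (y#ws))"
    then obtain i where i: "i<length (y#ws)" "(y#ws)!i = x" "subseq p (drop (Suc i) (y#ws))" by blast
    show "x = y \<and> subseq p ws \<or> (\<exists>i<length ws. ws ! i = x \<and> subseq p (drop (Suc i) ws))"
    proof (cases i)
      case 0 thus ?thesis using i by auto
    next
      case (Suc j) thus ?thesis using i by auto
    qed
  qed
  finally show ?case .
qed

lemma subseq_3_idx:
  "subseq [a,b,c] w \<longleftrightarrow> (\<exists>i j l. i < j \<and> j < l \<and> l < length w \<and> w!i = a \<and> w!j = b \<and> w!l = c)"
proof
  assume "subseq [a,b,c] w"
  then obtain i where i: "i < length w" "w!i = a" "subseq [b,c] (drop (Suc i) w)"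
    unfolding subseq_Cons_idx[of a] by blast
  then obtain j where j: "j < length (drop (Suc i) w)" "drop (Suc i) w ! j = b"
      "subseq [c] (drop (Suc j) (drop (Suc i) w))"
    using i(3) unfolding subseq_Cons_idx[of b] by blast
  then obtain l where l: "l < length (drop (Suc j) (drop (Suc i) w))"
     "drop (Suc j) (drop (Suc i) w) ! l = c"
    using j(3) unfolding subseq_Cons_idx[of c] by blast
  show "\<exists>i j l. i < j \<and> j < l \<and> l < length w \<and> w!i = a \<and> w!j = b \<and> w!l = c"
    apply (rule exI[of _ i], rule exI[of _ "Suc i + j"], rule exI[of _ "Suc (Suc i + j) + l"])
    using i j l by (auto simp: ac_simps)
next
  assume "\<exists>i j l. i < j \<and> j < l \<and> l < length w \<and> w!i = a \<and> w!j = b \<and> w!l = c"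
  then obtain i j l where h: "i < j" "j < l" "l < length w" "w!i = a" "w!j = b" "w!l = c" by blast
  have "subseq [c] (drop (Suc (j - Suc i)) (drop (Suc i) w))"
    unfolding subseq_Cons_idx[of c]
    apply (rule exI[of _ "l - Suc j"]) using h by auto
  then have "subseq [b,c] (drop (Suc i) w)"
    unfolding subseq_Cons_idx[of b]
    apply -
    apply (rule exI[of _ "j - Suc i"]) using h by auto
  then show "subseq [a,b,c] w"
    unfolding subseq_Cons_idx[of a]
    apply -
    apply (rule exI[of _ i]) using h by auto
qed

lemma avoids_iff: "avoids_010 w \<longleftrightarrow> (\<forall>a b. a < b \<longrightarrow> \<not> subseq [a,b,a] w)"
  unfolding avoids_010_def subseq_3_idx
proof
  assume L: "\<not> (\<exists>i j l. i < j \<and> j < l \<and> l < length w \<and> w ! i = w ! l \<and> w ! l < w ! j)"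
  show "\<forall>a b. a < b \<longrightarrow> \<not> (\<exists>i j l. i < j \<and> j < l \<and> l < length w \<and> w ! i = a \<and> w ! j = b \<and> w ! l = a)"
  proof (intro allI impI notI)
    fix a b assume ab: "a < b" "\<exists>i j l. i < j \<and> j < l \<and> l < length w \<and> w ! i = a \<and> w ! j = b \<and> w ! l = a"
    then obtain i j l where h: "i < j" "j < l" "l < length w" "w ! i = a" "w ! j = b" "w ! l = a" by blast
    have "\<exists>i j l. i < j \<and> j < l \<and> l < length w \<and> w ! i = w ! l \<and> w ! l < w ! j"
      by (rule exI[of _ i], rule exI[of _ j], rule exI[of _ l]) (simp add: h ab)
    with L show False by blast
  qed
next
  assume L: "\<forall>a b. a < b \<longrightarrow> \<not> (\<exists>i j l. i < j \<and> j < l \<and> l < length w \<and> w ! i = a \<and> w ! j = b \<and> w ! l = a)"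
  show "\<not> (\<exists>i j l. i < j \<and> j < l \<and> l < length w \<and> w ! i = w ! l \<and> w ! l < w ! j)"
  proof
    assume "\<exists>i j l. i < j \<and> j < l \<and> l < length w \<and> w ! i = w ! l \<and> w ! l < w ! j"
    then obtain i j l where h: "i < j" "j < l" "l < length w" "w ! i = w ! l" "w ! l < w ! j" by blast
    have "\<exists>i' j' l'. i' < j' \<and> j' < l' \<and> l' < length w \<and> w ! i' = w ! l \<and> w ! j' = w ! j \<and> w ! l' = w ! l"
      by (rule exI[of _ i], rule exI[of _ j], rule exI[of _ l]) (simp add: h)
    with L h(5) show False by blast
  qed
qed

lemma subseq_map_inv:
  "subseq p (map f u) \<Longrightarrow> \<exists>q. subseq q u \<and> p = map f q"
proof (induction u arbitrary: p)
  case Nil thus ?case by auto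
next
  case (Cons y u)
  show ?case
  proof (cases p)
    case Nil thus ?thesis by auto
  next
    case (Cons x r)
    show ?thesis
    proof (cases "x = f y")
      case True
      with Cons.prems Cons have "subseq r (map f u)" by auto
      from Cons.IH[OF this] obtain q where "subseq q u" "r = map f q" by blast
      thus ?thesis using True Cons by (intro exI[of _ "y#q"]) auto
    next
      case False
      with Cons.prems Cons have "subseq p (map f u)" by auto
      from Cons.IH[OF this] obtain q where "subseq q u" "p = map f q" by blast
      thus ?thesis by (intro exI[of _ q]) auto
    qed
  qed
qed

lemma subseq_remove_mid:
  assumes "subseq q (xs @ c # ys)"
  shows "subseq q (xs @ ys) \<or> (\<exists>q1 q2. q = q1 @ c # q2 \<and> subseq q1 xs \<and> subseq q2 ys)"
proof -
  from assms obtain q1 q2 where h: "q = q1 @ q2" "subseq q1 xs" "subseq q2 (c # ys)"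
    by (auto elim: subseq_appendE)
  show ?thesis
  proof (cases q2)
    case Nil thus ?thesis using h by (auto intro: subseq_rev_drop_many)
  next
    case (Cons x r)
    show ?thesis
    proof (cases "x = c")
      case True thus ?thesis using h Cons by auto
    next
      case False
      hence "subseq q2 ys" using h Cons by auto
      thus ?thesis using h by (auto intro: list_emb_append_mono)
    qed
  qed
qed

lemma subseq_dup:
  assumes "subseq q (c # c # ys)"
  shows "subseq q (c # ys) \<or> (\<exists>r. q = c # c # r)"
proof (cases q)
  case Nil thus ?thesis by auto
next
  case (Cons x r)
  show ?thesis
  proof (cases "x = c")
    case False thus ?thesis using assms Cons by auto
  next
    case True
    hence r: "subseq r (c # ys)" using assms Cons by auto
    show ?thesis
    proof (cases r)
      case Nil thus ?thesis using True Cons by auto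
    next
      case (Cons y r')
      show ?thesis
      proof (cases "y = c")
        case True thus ?thesis using \<open>x = c\<close> \<open>q = x # r\<close> Cons by auto
      next
        case False thus ?thesis using r Cons \<open>x = c\<close> \<open>q = x # r\<close> by auto
      qed
    qed
  qed
qed

lemma av_sub: "subseq u w \<Longrightarrow> avoids_010 w \<Longrightarrow> avoids_010 u"
  unfolding avoids_iff by (meson subseq_order.trans)

lemma av_dup: "avoids_010 (xs @ c # ys) \<Longrightarrow> avoids_010 (xs @ c # c # ys)"
  unfolding avoids_iff
proof (intro allI impI notI)
  fix a b :: nat
  assume av: "\<forall>a b. a < b \<longrightarrow> \<not> subseq [a, b, a] (xs @ c # ys)" and ab: "a < b"
    and s: "subseq [a, b, a] (xs @ c # c # ys)"
  from s obtain q1 q2 where h: "[a,b,a] = q1 @ q2" "subseq q1 xs" "subseq q2 (c # c # ys)"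
    by (auto elim: subseq_appendE)
  from subseq_dup[OF h(3)] show False
  proof
    assume "subseq q2 (c # ys)"
    hence "subseq [a,b,a] (xs @ c # ys)" using h by (auto intro: list_emb_append_mono)
    thus False using av ab by blast
  next
    assume "\<exists>r. q2 = c # c # r"
    then obtain r where "q2 = c # c # r" by blast
    with h(1) ab show False by (cases q1; auto simp: Cons_eq_append_conv)
  qed
qed

lemma av_ins_min:
  assumes "avoids_010 (xs @ ys)" "\<forall>x\<in>set (xs @ ys). c < x"
  shows "avoids_010 (xs @ c # ys)"
  unfolding avoids_iff
proof (intro allI impI notI)
  fix a b :: nat
  assume ab: "a < b" and s: "subseq [a, b, a] (xs @ c # ys)"
  from subseq_remove_mid[OF s] show False
  proof
    assume "subseq [a, b, a] (xs @ ys)"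
    thus False using assms(1) ab unfolding avoids_iff by blast
  next
    assume "\<exists>q1 q2. [a,b,a] = q1 @ c # q2 \<and> subseq q1 xs \<and> subseq q2 ys"
    then obtain q1 q2 where h: "[a,b,a] = q1 @ c # q2" "subseq q1 xs" "subseq q2 ys" by blast
    have s1: "\<forall>x\<in>set q1. c < x" using h(2) assms(2) by (auto elim: list_emb_set)
    have s2: "\<forall>x\<in>set q2. c < x" using h(3) assms(2) by (auto elim: list_emb_set)
    show False using h(1) s1 s2 ab
      by (cases q1; cases q2; auto simp: Cons_eq_append_conv)
  qed
qed

lemma av_map_Suc: "avoids_010 (map Suc v) \<longleftrightarrow> avoids_010 v"
  unfolding avoids_iff
proof (intro iffI allI impI notI)
  fix a b assume h: "\<forall>a b. a < b \<longrightarrow> \<not> subseq [a, b, a] (map Suc v)" "a < b" "subseq [a, b, a] v"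
  have "subseq [Suc a, Suc b, Suc a] (map Suc v)" using subseq_map[OF h(3), of Suc] by simp
  moreover have "Suc a < Suc b" using h(2) by simp
  ultimately show False using h(1) by blast
next
  fix a b assume h: "\<forall>a b. a < b \<longrightarrow> \<not> subseq [a, b, a] v" "a < b" "subseq [a, b, a] (map Suc v)"
  from subseq_map_inv[OF h(3)] obtain q where q: "subseq q v" "[a,b,a] = map Suc q"
    by (elim exE conjE) (rule that)
  then obtain a' b' c' where q3: "q = [a',b',c']"
    using q(2)[symmetric] by (auto simp: map_eq_Cons_conv)
  have "a = Suc a'" "b = Suc b'" "a = Suc c'" using q(2) q3 by simp_all
  hence "c' = a'" "a' < b'" using h(2) by simp_all
  moreover have "subseq [a',b',a'] v" using q(1) q3 \<open>c' = a'\<close> by simp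
  ultimately show False using h(1) by blast
qed

lemma app_uniq:
  "xs @ c # ys = xs' @ c # ys' \<Longrightarrow> c \<notin> set xs \<Longrightarrow> c \<notin> set xs' \<Longrightarrow> xs = xs' \<and> ys = ys'"
proof (induction xs arbitrary: xs')
  case Nil thus ?case by (cases xs') auto
next
  case (Cons x xs) thus ?case by (cases xs') auto
qed


definition B1 :: "nat \<Rightarrow> nat \<Rightarrow> nat list set" where
  "B1 n k = {w \<in> A_set (Suc n) k. 1 \<notin> set (remove1 1 w)}"
definition B2 :: "nat \<Rightarrow> nat \<Rightarrow> nat list set" where
  "B2 n k = {w \<in> A_set (Suc n) k. 1 \<in> set (remove1 1 w)}"

definition gdup :: "nat list \<Rightarrow> nat list" where
  "gdup v = takeWhile (\<lambda>x. x \<noteq> 1) v @ 1 # dropWhile (\<lambda>x. x \<noteq> 1) v"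

lemma remove1_gdup: "remove1 1 (gdup v) = v"
proof -
  have "1 \<notin> set (takeWhile (\<lambda>x. x \<noteq> (1::nat)) v)" by (auto dest: set_takeWhileD)
  thus ?thesis unfolding gdup_def by (simp add: remove1_append)
qed

lemma split_first1:
  assumes "(1::nat) \<in> set v"
  obtains xs ys where "v = xs @ 1 # ys" "1 \<notin> set xs"
    "takeWhile (\<lambda>x. x \<noteq> 1) v = xs" "dropWhile (\<lambda>x. x \<noteq> 1) v = 1 # ys"
proof -
  obtain xs ys where "v = xs @ 1 # ys" "1 \<notin> set xs"
    using split_list_first[OF assms] by blast
  moreover have "takeWhile (\<lambda>x. x \<noteq> 1) v = xs" "dropWhile (\<lambda>x. x \<noteq> 1) v = 1 # ys"
    using calculation by (auto simp: takeWhile_append dropWhile_append)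
  ultimately show ?thesis using that by blast
qed

lemma part2:
  assumes "k \<ge> 1"
  shows "bij_betw gdup (A_set n k) (B2 n k)"
proof (rule bij_betw_imageI)
  show "inj_on gdup (A_set n k)"
    by (metis inj_onI remove1_gdup)
  show "gdup ` A_set n k = B2 n k"
  proof safe
    fix v assume v: "v \<in> A_set n k"
    hence "1 \<in> set v" using assms unfolding A_set_def by auto
    then obtain xs ys where h: "v = xs @ 1 # ys" "1 \<notin> set xs"
      "takeWhile (\<lambda>x. x \<noteq> 1) v = xs" "dropWhile (\<lambda>x. x \<noteq> 1) v = 1 # ys"
      by (rule split_first1)
    have g: "gdup v = xs @ 1 # 1 # ys" unfolding gdup_def h(3,4) by simp
    have "(gdup v) ! 0 = k"
    proof (cases xs)
      case Nil thus ?thesis using v h(1) g unfolding A_set_def by auto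
    next
      case (Cons x xs') thus ?thesis using v h(1) g unfolding A_set_def by auto
    qed
    moreover have "avoids_010 (gdup v)" unfolding g
      using v h(1) by (intro av_dup) (simp add: A_set_def)
    moreover have "set (gdup v) = set v" unfolding g by (auto simp: h(1))
    moreover have "length (gdup v) = Suc (length v)" unfolding g by (simp add: h(1))
    moreover have "1 \<in> set (remove1 1 (gdup v))" unfolding remove1_gdup by fact
    ultimately show "gdup v \<in> B2 n k" using v unfolding B2_def A_set_def by auto
  next
    fix w assume w: "w \<in> B2 n k"
    hence w1: "1 \<in> set w" using assms unfolding B2_def A_set_def by auto
    then obtain xs ys where h: "w = xs @ 1 # ys" "1 \<notin> set xs"
      "takeWhile (\<lambda>x. x \<noteq> 1) w = xs" "dropWhile (\<lambda>x. x \<noteq> 1) w = 1 # ys"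
      by (rule split_first1)
    have "1 \<in> set ys" using w h unfolding B2_def by (auto simp: remove1_append)
    then obtain y ys' where ys: "ys = y # ys'" by (cases ys) auto
    have "y = 1"
    proof (rule ccontr)
      assume "y \<noteq> 1"
      hence "1 \<in> set ys'" using \<open>1 \<in> set ys\<close> ys by auto
      have "y \<in> set w" using h ys by auto
      hence "1 < y" using \<open>y \<noteq> 1\<close> w unfolding B2_def A_set_def by auto
      have "subseq [1, y, 1] (1 # y # ys')"
        using \<open>1 \<in> set ys'\<close> by (simp add: subseq_singleton_left)
      hence "subseq [1, y, 1] w" unfolding h(1) ys by (rule subseq_drop_many)
      thus False using w \<open>1 < y\<close> unfolding B2_def A_set_def avoids_iff by blast
    qed
    define v where "v = xs @ 1 # ys'"
    have wv: "w = xs @ 1 # 1 # ys'" using h ys \<open>y = 1\<close> by simp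
    have gv: "gdup v = w"
      unfolding gdup_def v_def wv using h(2) by (simp add: takeWhile_append dropWhile_append)
    have "v \<in> A_set n k"
    proof -
      have "length v = n" using w unfolding wv v_def B2_def A_set_def by auto
      moreover have "set v = set w" unfolding wv v_def by auto
      moreover have "avoids_010 v"
      proof (rule av_sub)
        show "subseq v w" unfolding v_def wv
          by (simp add: subseq_append') (rule list_emb.list_emb_Cons, rule subseq_order.order_refl)
      qed (use w in \<open>simp add: B2_def A_set_def\<close>)
      moreover have "v ! 0 = k"
        using w unfolding wv v_def B2_def A_set_def by (cases xs) auto
      ultimately show ?thesis using w unfolding B2_def A_set_def by auto
    qed
    thus "w \<in> gdup ` A_set n k" using gv by blast
  qed
qed


definition ins1 :: "nat \<times> nat list \<Rightarrow> nat list" where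
  "ins1 pv = take (fst pv) (map Suc (snd pv)) @ 1 # drop (fst pv) (map Suc (snd pv))"

lemma part1:
  assumes "k \<ge> 1" "n \<ge> 1"
  shows "bij_betw ins1 ({1..n} \<times> A_set n (k - 1)) (B1 n k)"
proof (rule bij_betw_imageI)
  show "inj_on ins1 ({1..n} \<times> A_set n (k - 1))"
  proof (rule inj_onI, clarify)
    fix p v p' v'
    assume p: "p \<in> {1..n}" "v \<in> A_set n (k - 1)" "p' \<in> {1..n}" "v' \<in> A_set n (k - 1)"
      and e: "ins1 (p, v) = ins1 (p', v')"
    have "1 \<notin> set (take p (map Suc v))" "1 \<notin> set (take p' (map Suc v'))"
      using p unfolding A_set_def by (auto dest!: in_set_takeD)
    with e have u: "take p (map Suc v) = take p' (map Suc v')"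
       "drop p (map Suc v) = drop p' (map Suc v')"
      unfolding ins1_def using app_uniq by (metis fst_conv snd_conv)+
    have "p = p'" using arg_cong[OF u(1), of length] p unfolding A_set_def by auto
    moreover have "map Suc v = map Suc v'"
      by (metis append_take_drop_id u)
    hence "v = v'" by (simp add: inj_map_eq_map)
    ultimately show "p = p' \<and> v = v'" by simp
  qed
  show "ins1 ` ({1..n} \<times> A_set n (k - 1)) = B1 n k"
  proof safe
    fix p v assume p: "p \<in> {1..n}" and v: "v \<in> A_set n (k - 1)"
    define M where "M = map Suc v"
    have w: "ins1 (p, v) = take p M @ 1 # drop p M" unfolding ins1_def M_def by simp
    have lv: "length v = n" and sv: "set v = {1..k-1}" and av: "avoids_010 v"
      and v0: "v ! 0 = k - 1"
      using v unfolding A_set_def by auto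
    have "length (ins1 (p, v)) = Suc n" unfolding w M_def using lv p by auto
    moreover have "set (ins1 (p, v)) = {1..k}"
    proof -
      have "set (ins1 (p, v)) = insert 1 (set M)"
        unfolding w by (metis Un_insert_right append_take_drop_id set_append list.set(2))
      also have "\<dots> = insert 1 (Suc ` {1..k-1})" unfolding M_def by (simp add: sv)
      also have "\<dots> = {1..k}" using assms(1)
        by (auto simp: image_iff)
      finally show ?thesis .
    qed
    moreover have "avoids_010 (ins1 (p, v))" unfolding w
    proof (rule av_ins_min)
      show "avoids_010 (take p M @ drop p M)" using av unfolding M_def by (simp add: av_map_Suc)
      show "\<forall>x\<in>set (take p M @ drop p M). 1 < x" unfolding M_def using sv by auto
    qed
    moreover have "ins1 (p, v) ! 0 = k"
    proof -
      have "take p M \<noteq> []" using p lv unfolding M_def by auto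
      hence "ins1 (p, v) ! 0 = M ! 0" unfolding w using p
        by (simp add: nth_append)
      also have "\<dots> = k" unfolding M_def using v0 lv p assms(1) by auto
      finally show ?thesis .
    qed
    moreover have "1 \<notin> set (remove1 1 (ins1 (p, v)))"
    proof -
      have "1 \<notin> set (take p M)" unfolding M_def using sv by (auto dest!: in_set_takeD)
      hence "remove1 1 (ins1 (p, v)) = M" unfolding w by (simp add: remove1_append)
      thus ?thesis unfolding M_def using sv by auto
    qed
    ultimately show "ins1 (p, v) \<in> B1 n k" unfolding B1_def A_set_def by auto
  next
    fix w assume w: "w \<in> B1 n k"
    hence lw: "length w = Suc n" and sw: "set w = {1..k}" and aw: "avoids_010 w"
      and w0: "w ! 0 = k" and r1: "1 \<notin> set (remove1 1 w)"
      unfolding B1_def A_set_def by auto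
    have "1 \<in> set w" using sw assms by auto
    obtain xs ys where h: "w = xs @ 1 # ys" "1 \<notin> set xs"
      using split_list_first[OF \<open>1 \<in> set w\<close>] by (elim exE conjE) (rule that)
    have "1 \<notin> set ys" using r1 h by (auto simp: remove1_append)
    have sxy: "set (xs @ ys) = {2..k}"
    proof -
      have "set (xs @ ys) = set w - {1}" using h(1,2) \<open>1 \<notin> set ys\<close> by auto
      also have "\<dots> = {2..k}" unfolding sw by auto
      finally show ?thesis .
    qed
    have "xs \<noteq> []"
    proof
      assume "xs = []"
      hence "k = 1" using w0 h by simp
      have "ys \<noteq> []" using lw h \<open>xs = []\<close> assms by auto
      then obtain y where "y \<in> set ys" by (cases ys) auto
      thus False using sxy \<open>k = 1\<close> by auto
    qed
    define v where "v = map (\<lambda>x. x - 1) (xs @ ys)"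
    define p where "p = length xs"
    have ge: "\<forall>x\<in>set (xs @ ys). 2 \<le> x" using sxy by simp
    have Mv: "map Suc v = xs @ ys" unfolding v_def map_map
    proof (rule map_idI)
      fix x assume "x \<in> set (xs @ ys)"
      hence "2 \<le> x" using ge by blast
      thus "(Suc \<circ> (\<lambda>x. x - 1)) x = x" by simp
    qed
    have "ins1 (p, v) = w" unfolding ins1_def p_def by (simp add: Mv h(1))
    moreover have "p \<in> {1..n}" unfolding p_def using \<open>xs \<noteq> []\<close> lw h by (auto simp: Suc_le_eq)
    moreover have "v \<in> A_set n (k - 1)"
    proof -
      have "length v = n" unfolding v_def using lw h by auto
      moreover have "set v = {1..k-1}"
      proof -
        have "set v = (\<lambda>x. x - 1) ` {2..k}" unfolding v_def set_map sxy ..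
        also have "\<dots> = {1..k-1}"
        proof
          show "(\<lambda>x. x - 1) ` {2..k} \<subseteq> {1..k - 1}" by auto
          show "{1..k - 1} \<subseteq> (\<lambda>x. x - 1) ` {2..k}"
          proof
            fix x assume "x \<in> {1..k - 1}"
            thus "x \<in> (\<lambda>x. x - 1) ` {2..k}" by (intro image_eqI[of _ _ "Suc x"]) auto
          qed
        qed
        finally show ?thesis .
      qed
      moreover have "avoids_010 v"
      proof -
        have "avoids_010 (xs @ ys)"
          by (rule av_sub[OF _ aw]) (simp add: h(1) subseq_append', rule list_emb.list_emb_Cons, rule subseq_order.order_refl)
        thus ?thesis using av_map_Suc[of v] Mv by simp
      qed
      moreover have "v ! 0 = k - 1"
        using w0 h \<open>xs \<noteq> []\<close> unfolding v_def by (cases xs) auto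
      ultimately show ?thesis unfolding A_set_def by auto
    qed
    ultimately show "w \<in> ins1 ` ({1..n} \<times> A_set n (k - 1))"
      by (intro image_eqI[of _ _ "(p, v)"]) auto
  qed
qed

lemma finite_A: "finite (A_set n k)"
proof (rule finite_subset)
  show "A_set n k \<subseteq> {w. set w \<subseteq> {1..k} \<and> length w = n}" unfolding A_set_def by auto
  show "finite {w. set w \<subseteq> {1..k} \<and> length w = n}" by (rule finite_lists_length_eq) simp
qed

lemma card_rec:
  assumes "k \<ge> 1" "n \<ge> 1"
  shows "card (A_set (Suc n) k) = n * card (A_set n (k - 1)) + card (A_set n k)"
proof -
  have U: "A_set (Suc n) k = B1 n k \<union> B2 n k" unfolding B1_def B2_def by auto
  have D: "B1 n k \<inter> B2 n k = {}" unfolding B1_def B2_def by auto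
  have F1: "finite (B1 n k)" "finite (B2 n k)"
    using finite_A[of "Suc n" k] unfolding B1_def B2_def by auto
  have "card (A_set (Suc n) k) = card (B1 n k) + card (B2 n k)"
    unfolding U using F1 D by (rule card_Un_disjoint)
  moreover have "card (B1 n k) = card ({1..n} \<times> A_set n (k - 1))"
    using bij_betw_same_card[OF part1[OF assms]] by simp
  moreover have "card (B2 n k) = card (A_set n k)"
    using bij_betw_same_card[OF part2[OF assms(1)]] by simp
  ultimately show ?thesis by (simp add: card_cartesian_product)
qed

lemma A_zero: "n \<ge> 1 \<Longrightarrow> A_set n 0 = {}"
  unfolding A_set_def by auto

lemma A_one_mem: "w \<in> A_set 1 k \<Longrightarrow> k = 1 \<and> w = [1]"
proof -
  assume w: "w \<in> A_set 1 k"
  then obtain x where x: "w = [x]" unfolding A_set_def by (auto simp: length_Suc_conv)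
  have "x = k" "{x} = {1..k}" using w unfolding A_set_def x by auto
  hence "k = 1" by (metis atLeastAtMost_singleton_iff)
  thus ?thesis using x \<open>x = k\<close> by simp
qed

lemma A_one: "A_set 1 k = (if k = 1 then {[1]} else {})"
proof (cases "k = 1")
  case True
  have m: "[1] \<in> A_set 1 1" unfolding A_set_def avoids_010_def by simp
  have "A_set 1 1 = {[1]}"
  proof (rule set_eqI, rule iffI)
    fix w assume "w \<in> A_set 1 1" thus "w \<in> {[1]}" using A_one_mem by simp
  next
    fix w :: "nat list" assume "w \<in> {[1]}" thus "w \<in> A_set 1 1" using m by simp
  qed
  thus ?thesis using True by simp
next
  case False
  have "A_set 1 k = {}"
  proof (rule equals0I)
    fix w assume "w \<in> A_set 1 k" thus False using A_one_mem False by blast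
  qed
  thus ?thesis using False by simp
qed

lemma main_all: "n \<ge> 1 \<Longrightarrow> card (A_set n k) = stirling n (n + 1 - k)"
proof (induction n arbitrary: k rule: nat_induct_at_least)
  case base
  show ?case
  proof (cases "k = 0")
    case True thus ?thesis by (simp add: A_zero)
  next
    case False
    thus ?thesis unfolding A_one by (cases "k = 1") auto
  qed
next
  case (Suc n)
  show ?case
  proof (cases "k = 0")
    case True thus ?thesis by (simp add: A_zero)
  next
    case False
    hence k: "k \<ge> 1" by simp
    have "card (A_set (Suc n) k) = n * stirling n (n + 1 - (k - 1)) + stirling n (n + 1 - k)"
      using card_rec[OF k Suc.hyps] Suc.IH by simp
    also have "\<dots> = stirling (Suc n) (Suc n + 1 - k)"
    proof (cases "k \<le> n + 1")
      case True
      hence "Suc n + 1 - k = Suc (n + 1 - k)" "n + 1 - (k - 1) = Suc (n + 1 - k)" using k by auto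
      thus ?thesis by simp
    next
      case False
      hence "Suc n + 1 - k = 0" "n + 1 - (k - 1) = 0" "n + 1 - k = 0" by auto
      thus ?thesis using Suc.hyps by simp
    qed
    finally show ?thesis .
  qed
qed

theorem mainTheorem1:
  fixes n k :: nat
  assumes "n \<ge> 1" and "k \<ge> 1"
  shows "card (A_set n k) = stirling n (n + 1 - k)"
  using main_all[OF assms(1)] .

end
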